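(* Let $k\ge1$ and $1\le r\le 4k^2$. Let $\overline{\mathcal{B}}(2k,2k;r)$ be the subset of $\mathcal{B}(2k,2k;r)$ consisting of all boards whose board partition $(\lambda_1,\lambda_2,\lambda_3,\lambda_4)$ satisfies: (i) $\lambda_1\ge\lambda_i$ for all $i>1$; (ii) $\lambda_2\ge\lambda_4$; (iii) if $\lambda_1=\lambda_2$ then $\lambda_3\ge\lambda_4$. Then: (1) $\overline{\mathcal{B}}(2k,2k;r)$ is a disjoint union of sets each consisting of all boards in $\mathcal{B}(2k,2k;r)$ with some fixed board partition; (2) every board of $\mathcal{B}(2k,2k;r)$ is equivalent under $D_4$ to some board of $\overline{\mathcal{B}}(2k,2k;r)$; (3) if two boards of $\overline{\mathcal{B}}(2k,2k;r)$ are equivalent under $D_4$, they have the same board partition.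
   Context: A $2k\times 2k$ grid has cells $(i,j)$, rows $i=1,\dots,2k$ numbered top to bottom and columns $j=1,\dots,2k$ left to right. $\mathcal{B}(2k,2k;r)$ is the set of boards, i.e. subsets of exactly $r$ ("blocked") cells. The dihedral group $D_4$ of symmetries of the square (rotations by $0,90,180,270$ degrees about the center, reflections across the horizontal midline, vertical midline, main diagonal and anti-diagonal) acts on cells and hence on boards; two boards are equivalent under $D_4$ if some element maps one to the other. The grid is divided into four $k\times k$ quadrants: $Q_1$ = rows $1..k$, columns $1..k$ (top-left); $Q_2$ = rows $1..k$, columns $k+1..2k$ (top-right); $Q_3$ = rows $k+1..2k$, columns $k+1..2k$ (bottom-right); $Q_4$ = rows $k+1..2k$, columns $1..k$ (bottom-left). The board partition of a board is $(\lambda_1,\lambda_2,\lambda_3,\lambda_4)$, where $\lambda_i$ is the number of blocked cells in $Q_i$. *)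

theory Defs
  imports Main
begin

type_synonym cell = "nat \<times> nat"

text \<open>Cells (i,j) of the n x n grid, 1-based, rows top to bottom, columns left to right.\<close>
definition grid :: "nat \<Rightarrow> cell set" where
  "grid n = {1..n} \<times> {1..n}"

definition boards :: "nat \<Rightarrow> nat \<Rightarrow> cell set set" where
  "boards n r = {B. B \<subseteq> grid n \<and> card B = r}"

definition D4 :: "nat \<Rightarrow> (cell \<Rightarrow> cell) set" where
  "D4 n = {
     (\<lambda>(i,j). (i, j)),
     (\<lambda>(i,j). (j, n + 1 - i)),
     (\<lambda>(i,j). (n + 1 - i, n + 1 - j)),
     (\<lambda>(i,j). (n + 1 - j, i)),
     (\<lambda>(i,j). (n + 1 - i, j)),
     (\<lambda>(i,j). (i, n + 1 - j)),
     (\<lambda>(i,j). (j, i)),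
     (\<lambda>(i,j). (n + 1 - j, n + 1 - i)) }"

definition D4_equiv :: "nat \<Rightarrow> cell set \<Rightarrow> cell set \<Rightarrow> bool" where
  "D4_equiv n B B' \<longleftrightarrow> (\<exists>g\<in>D4 n. g ` B = B')"

definition Q1 :: "nat \<Rightarrow> cell set" where "Q1 k = {1..k} \<times> {1..k}"
definition Q2 :: "nat \<Rightarrow> cell set" where "Q2 k = {1..k} \<times> {k+1..2*k}"
definition Q3 :: "nat \<Rightarrow> cell set" where "Q3 k = {k+1..2*k} \<times> {k+1..2*k}"
definition Q4 :: "nat \<Rightarrow> cell set" where "Q4 k = {k+1..2*k} \<times> {1..k}"

definition board_partition :: "nat \<Rightarrow> cell set \<Rightarrow> nat \<times> nat \<times> nat \<times> nat" where
  "board_partition k B =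
     (card (B \<inter> Q1 k), card (B \<inter> Q2 k), card (B \<inter> Q3 k), card (B \<inter> Q4 k))"

definition canonical_partition :: "nat \<times> nat \<times> nat \<times> nat \<Rightarrow> bool" where
  "canonical_partition p = (case p of (l1, l2, l3, l4) \<Rightarrow>
      l1 \<ge> l2 \<and> l1 \<ge> l3 \<and> l1 \<ge> l4 \<and> l2 \<ge> l4 \<and> (l1 = l2 \<longrightarrow> l3 \<ge> l4))"

definition boards_bar :: "nat \<Rightarrow> nat \<Rightarrow> cell set set" where
  "boards_bar k r = {B \<in> boards (2*k) r. canonical_partition (board_partition k B)}"

end

theory Submission
  imports Defs
begin

lemma D4_props:
  assumes "g \<in> D4 n"
  shows "inj_on g (grid n) \<and> g ` grid n \<subseteq> grid n"
  using assms unfolding D4_def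
  by (elim insertE emptyE) (auto simp: inj_on_def grid_def)

lemma D4_board:
  assumes "g \<in> D4 n" "B \<in> boards n r"
  shows "g ` B \<in> boards n r"
proof -
  have "inj_on g B" "g ` B \<subseteq> grid n" using D4_props[OF assms(1)] assms(2)
    by (auto simp: boards_def intro: inj_on_subset)
  then show ?thesis using assms(2) by (simp add: boards_def card_image)
qed

lemma card_map:
  assumes "inj_on g (grid n)" "B \<subseteq> grid n" "\<forall>x\<in>grid n. g x \<in> Qj \<longleftrightarrow> x \<in> Qi"
  shows "card (g ` B \<inter> Qj) = card (B \<inter> Qi)"
proof -
  have "g ` B \<inter> Qj = g ` (B \<inter> Qi)" using assms(2,3) by blast
  moreover have "inj_on g (B \<inter> Qi)" using assms(1,2) by (meson inf.coboundedI1 inj_on_subset)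
  ultimately show ?thesis by (simp add: card_image)
qed

lemma bp_perm:
  assumes inj: "inj_on g (grid (2*k))" and B: "B \<subseteq> grid (2*k)"
    and h1: "\<forall>x\<in>grid (2*k). g x \<in> Q1 k \<longleftrightarrow> x \<in> A1"
    and h2: "\<forall>x\<in>grid (2*k). g x \<in> Q2 k \<longleftrightarrow> x \<in> A2"
    and h3: "\<forall>x\<in>grid (2*k). g x \<in> Q3 k \<longleftrightarrow> x \<in> A3"
    and h4: "\<forall>x\<in>grid (2*k). g x \<in> Q4 k \<longleftrightarrow> x \<in> A4"
  shows "board_partition k (g ` B) = (card (B \<inter> A1), card (B \<inter> A2), card (B \<inter> A3), card (B \<inter> A4))"
  unfolding board_partition_def
  using card_map[OF inj B h1] card_map[OF inj B h2] card_map[OF inj B h3] card_map[OF inj B h4]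
  by simp

lemma bp_g0:
  assumes "B \<subseteq> grid (2*k)" "board_partition k B = (a,b,c,d)"
  shows "(\<lambda>(i,j). (i, j)) \<in> D4 (2*k) \<and> board_partition k ((\<lambda>(i,j). (i, j)) ` B) = (a,b,c,d)"
proof -
  define g :: "cell \<Rightarrow> cell" where "g = (\<lambda>(i,j). (i, j))"
  have inj: "inj_on g (grid (2*k))" unfolding g_def by (auto simp: inj_on_def grid_def)
  have e: "card (B \<inter> Q1 k) = a" "card (B \<inter> Q2 k) = b" "card (B \<inter> Q3 k) = c" "card (B \<inter> Q4 k) = d"
    using assms(2) by (auto simp: board_partition_def)
  have cc: "\<forall>x\<in>grid (2*k). g x \<in> Q1 k \<longleftrightarrow> x \<in> Q1 k" "\<forall>x\<in>grid (2*k). g x \<in> Q2 k \<longleftrightarrow> x \<in> Q2 k" "\<forall>x\<in>grid (2*k). g x \<in> Q3 k \<longleftrightarrow> x \<in> Q3 k" "\<forall>x\<in>grid (2*k). g x \<in> Q4 k \<longleftrightarrow> x \<in> Q4 k"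
    unfolding g_def by (auto simp: grid_def Q1_def Q2_def Q3_def Q4_def)
  have "board_partition k (g ` B) = (a,b,c,d)" using bp_perm[OF inj assms(1) cc] by (simp add: e)
  moreover have "g \<in> D4 (2*k)" unfolding g_def D4_def by simp
  ultimately show ?thesis unfolding g_def by simp
qed

lemma bp_g1:
  assumes "B \<subseteq> grid (2*k)" "board_partition k B = (a,b,c,d)"
  shows "(\<lambda>(i,j). (j, 2*k + 1 - i)) \<in> D4 (2*k) \<and> board_partition k ((\<lambda>(i,j). (j, 2*k + 1 - i)) ` B) = (d,a,b,c)"
proof -
  define g :: "cell \<Rightarrow> cell" where "g = (\<lambda>(i,j). (j, 2*k + 1 - i))"
  have inj: "inj_on g (grid (2*k))" unfolding g_def by (auto simp: inj_on_def grid_def)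
  have e: "card (B \<inter> Q1 k) = a" "card (B \<inter> Q2 k) = b" "card (B \<inter> Q3 k) = c" "card (B \<inter> Q4 k) = d"
    using assms(2) by (auto simp: board_partition_def)
  have cc: "\<forall>x\<in>grid (2*k). g x \<in> Q1 k \<longleftrightarrow> x \<in> Q4 k" "\<forall>x\<in>grid (2*k). g x \<in> Q2 k \<longleftrightarrow> x \<in> Q1 k" "\<forall>x\<in>grid (2*k). g x \<in> Q3 k \<longleftrightarrow> x \<in> Q2 k" "\<forall>x\<in>grid (2*k). g x \<in> Q4 k \<longleftrightarrow> x \<in> Q3 k"
    unfolding g_def by (auto simp: grid_def Q1_def Q2_def Q3_def Q4_def)
  have "board_partition k (g ` B) = (d,a,b,c)" using bp_perm[OF inj assms(1) cc] by (simp add: e)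
  moreover have "g \<in> D4 (2*k)" unfolding g_def D4_def by simp
  ultimately show ?thesis unfolding g_def by simp
qed

lemma bp_g2:
  assumes "B \<subseteq> grid (2*k)" "board_partition k B = (a,b,c,d)"
  shows "(\<lambda>(i,j). (2*k + 1 - i, 2*k + 1 - j)) \<in> D4 (2*k) \<and> board_partition k ((\<lambda>(i,j). (2*k + 1 - i, 2*k + 1 - j)) ` B) = (c,d,a,b)"
proof -
  define g :: "cell \<Rightarrow> cell" where "g = (\<lambda>(i,j). (2*k + 1 - i, 2*k + 1 - j))"
  have inj: "inj_on g (grid (2*k))" unfolding g_def by (auto simp: inj_on_def grid_def)
  have e: "card (B \<inter> Q1 k) = a" "card (B \<inter> Q2 k) = b" "card (B \<inter> Q3 k) = c" "card (B \<inter> Q4 k) = d"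
    using assms(2) by (auto simp: board_partition_def)
  have cc: "\<forall>x\<in>grid (2*k). g x \<in> Q1 k \<longleftrightarrow> x \<in> Q3 k" "\<forall>x\<in>grid (2*k). g x \<in> Q2 k \<longleftrightarrow> x \<in> Q4 k" "\<forall>x\<in>grid (2*k). g x \<in> Q3 k \<longleftrightarrow> x \<in> Q1 k" "\<forall>x\<in>grid (2*k). g x \<in> Q4 k \<longleftrightarrow> x \<in> Q2 k"
    unfolding g_def by (auto simp: grid_def Q1_def Q2_def Q3_def Q4_def)
  have "board_partition k (g ` B) = (c,d,a,b)" using bp_perm[OF inj assms(1) cc] by (simp add: e)
  moreover have "g \<in> D4 (2*k)" unfolding g_def D4_def by simp
  ultimately show ?thesis unfolding g_def by simp
qed

lemma bp_g3:
  assumes "B \<subseteq> grid (2*k)" "board_partition k B = (a,b,c,d)"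
  shows "(\<lambda>(i,j). (2*k + 1 - j, i)) \<in> D4 (2*k) \<and> board_partition k ((\<lambda>(i,j). (2*k + 1 - j, i)) ` B) = (b,c,d,a)"
proof -
  define g :: "cell \<Rightarrow> cell" where "g = (\<lambda>(i,j). (2*k + 1 - j, i))"
  have inj: "inj_on g (grid (2*k))" unfolding g_def by (auto simp: inj_on_def grid_def)
  have e: "card (B \<inter> Q1 k) = a" "card (B \<inter> Q2 k) = b" "card (B \<inter> Q3 k) = c" "card (B \<inter> Q4 k) = d"
    using assms(2) by (auto simp: board_partition_def)
  have cc: "\<forall>x\<in>grid (2*k). g x \<in> Q1 k \<longleftrightarrow> x \<in> Q2 k" "\<forall>x\<in>grid (2*k). g x \<in> Q2 k \<longleftrightarrow> x \<in> Q3 k" "\<forall>x\<in>grid (2*k). g x \<in> Q3 k \<longleftrightarrow> x \<in> Q4 k" "\<forall>x\<in>grid (2*k). g x \<in> Q4 k \<longleftrightarrow> x \<in> Q1 k"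
    unfolding g_def by (auto simp: grid_def Q1_def Q2_def Q3_def Q4_def)
  have "board_partition k (g ` B) = (b,c,d,a)" using bp_perm[OF inj assms(1) cc] by (simp add: e)
  moreover have "g \<in> D4 (2*k)" unfolding g_def D4_def by simp
  ultimately show ?thesis unfolding g_def by simp
qed

lemma bp_g4:
  assumes "B \<subseteq> grid (2*k)" "board_partition k B = (a,b,c,d)"
  shows "(\<lambda>(i,j). (2*k + 1 - i, j)) \<in> D4 (2*k) \<and> board_partition k ((\<lambda>(i,j). (2*k + 1 - i, j)) ` B) = (d,c,b,a)"
proof -
  define g :: "cell \<Rightarrow> cell" where "g = (\<lambda>(i,j). (2*k + 1 - i, j))"
  have inj: "inj_on g (grid (2*k))" unfolding g_def by (auto simp: inj_on_def grid_def)
  have e: "card (B \<inter> Q1 k) = a" "card (B \<inter> Q2 k) = b" "card (B \<inter> Q3 k) = c" "card (B \<inter> Q4 k) = d"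
    using assms(2) by (auto simp: board_partition_def)
  have cc: "\<forall>x\<in>grid (2*k). g x \<in> Q1 k \<longleftrightarrow> x \<in> Q4 k" "\<forall>x\<in>grid (2*k). g x \<in> Q2 k \<longleftrightarrow> x \<in> Q3 k" "\<forall>x\<in>grid (2*k). g x \<in> Q3 k \<longleftrightarrow> x \<in> Q2 k" "\<forall>x\<in>grid (2*k). g x \<in> Q4 k \<longleftrightarrow> x \<in> Q1 k"
    unfolding g_def by (auto simp: grid_def Q1_def Q2_def Q3_def Q4_def)
  have "board_partition k (g ` B) = (d,c,b,a)" using bp_perm[OF inj assms(1) cc] by (simp add: e)
  moreover have "g \<in> D4 (2*k)" unfolding g_def D4_def by simp
  ultimately show ?thesis unfolding g_def by simp
qed

lemma bp_g5:
  assumes "B \<subseteq> grid (2*k)" "board_partition k B = (a,b,c,d)"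
  shows "(\<lambda>(i,j). (i, 2*k + 1 - j)) \<in> D4 (2*k) \<and> board_partition k ((\<lambda>(i,j). (i, 2*k + 1 - j)) ` B) = (b,a,d,c)"
proof -
  define g :: "cell \<Rightarrow> cell" where "g = (\<lambda>(i,j). (i, 2*k + 1 - j))"
  have inj: "inj_on g (grid (2*k))" unfolding g_def by (auto simp: inj_on_def grid_def)
  have e: "card (B \<inter> Q1 k) = a" "card (B \<inter> Q2 k) = b" "card (B \<inter> Q3 k) = c" "card (B \<inter> Q4 k) = d"
    using assms(2) by (auto simp: board_partition_def)
  have cc: "\<forall>x\<in>grid (2*k). g x \<in> Q1 k \<longleftrightarrow> x \<in> Q2 k" "\<forall>x\<in>grid (2*k). g x \<in> Q2 k \<longleftrightarrow> x \<in> Q1 k" "\<forall>x\<in>grid (2*k). g x \<in> Q3 k \<longleftrightarrow> x \<in> Q4 k" "\<forall>x\<in>grid (2*k). g x \<in> Q4 k \<longleftrightarrow> x \<in> Q3 k"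
    unfolding g_def by (auto simp: grid_def Q1_def Q2_def Q3_def Q4_def)
  have "board_partition k (g ` B) = (b,a,d,c)" using bp_perm[OF inj assms(1) cc] by (simp add: e)
  moreover have "g \<in> D4 (2*k)" unfolding g_def D4_def by simp
  ultimately show ?thesis unfolding g_def by simp
qed

lemma bp_g6:
  assumes "B \<subseteq> grid (2*k)" "board_partition k B = (a,b,c,d)"
  shows "(\<lambda>(i,j). (j, i)) \<in> D4 (2*k) \<and> board_partition k ((\<lambda>(i,j). (j, i)) ` B) = (a,d,c,b)"
proof -
  define g :: "cell \<Rightarrow> cell" where "g = (\<lambda>(i,j). (j, i))"
  have inj: "inj_on g (grid (2*k))" unfolding g_def by (auto simp: inj_on_def grid_def)
  have e: "card (B \<inter> Q1 k) = a" "card (B \<inter> Q2 k) = b" "card (B \<inter> Q3 k) = c" "card (B \<inter> Q4 k) = d"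
    using assms(2) by (auto simp: board_partition_def)
  have cc: "\<forall>x\<in>grid (2*k). g x \<in> Q1 k \<longleftrightarrow> x \<in> Q1 k" "\<forall>x\<in>grid (2*k). g x \<in> Q2 k \<longleftrightarrow> x \<in> Q4 k" "\<forall>x\<in>grid (2*k). g x \<in> Q3 k \<longleftrightarrow> x \<in> Q3 k" "\<forall>x\<in>grid (2*k). g x \<in> Q4 k \<longleftrightarrow> x \<in> Q2 k"
    unfolding g_def by (auto simp: grid_def Q1_def Q2_def Q3_def Q4_def)
  have "board_partition k (g ` B) = (a,d,c,b)" using bp_perm[OF inj assms(1) cc] by (simp add: e)
  moreover have "g \<in> D4 (2*k)" unfolding g_def D4_def by simp
  ultimately show ?thesis unfolding g_def by simp
qed

lemma bp_g7:
  assumes "B \<subseteq> grid (2*k)" "board_partition k B = (a,b,c,d)"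
  shows "(\<lambda>(i,j). (2*k + 1 - j, 2*k + 1 - i)) \<in> D4 (2*k) \<and> board_partition k ((\<lambda>(i,j). (2*k + 1 - j, 2*k + 1 - i)) ` B) = (c,b,a,d)"
proof -
  define g :: "cell \<Rightarrow> cell" where "g = (\<lambda>(i,j). (2*k + 1 - j, 2*k + 1 - i))"
  have inj: "inj_on g (grid (2*k))" unfolding g_def by (auto simp: inj_on_def grid_def)
  have e: "card (B \<inter> Q1 k) = a" "card (B \<inter> Q2 k) = b" "card (B \<inter> Q3 k) = c" "card (B \<inter> Q4 k) = d"
    using assms(2) by (auto simp: board_partition_def)
  have cc: "\<forall>x\<in>grid (2*k). g x \<in> Q1 k \<longleftrightarrow> x \<in> Q3 k" "\<forall>x\<in>grid (2*k). g x \<in> Q2 k \<longleftrightarrow> x \<in> Q2 k" "\<forall>x\<in>grid (2*k). g x \<in> Q3 k \<longleftrightarrow> x \<in> Q1 k" "\<forall>x\<in>grid (2*k). g x \<in> Q4 k \<longleftrightarrow> x \<in> Q4 k"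
    unfolding g_def by (auto simp: grid_def Q1_def Q2_def Q3_def Q4_def)
  have "board_partition k (g ` B) = (c,b,a,d)" using bp_perm[OF inj assms(1) cc] by (simp add: e)
  moreover have "g \<in> D4 (2*k)" unfolding g_def D4_def by simp
  ultimately show ?thesis unfolding g_def by simp
qed

lemma D4_cases:
  assumes "g \<in> D4 (2*k)" "B \<subseteq> grid (2*k)" "board_partition k B = (a,b,c,d)"
  shows "board_partition k (g ` B) \<in> {(a,b,c,d),(d,a,b,c),(c,d,a,b),(b,c,d,a),(d,c,b,a),(b,a,d,c),(a,d,c,b),(c,b,a,d)}"
  using assms(1) bp_g0[OF assms(2,3)] bp_g1[OF assms(2,3)] bp_g2[OF assms(2,3)] bp_g3[OF assms(2,3)]
    bp_g4[OF assms(2,3)] bp_g5[OF assms(2,3)] bp_g6[OF assms(2,3)] bp_g7[OF assms(2,3)]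
  unfolding D4_def by (elim insertE emptyE) simp_all

lemma D4_exists:
  assumes "B \<subseteq> grid (2*k)" "board_partition k B = (a,b,c,d)" "t \<in> {(a,b,c,d),(d,a,b,c),(c,d,a,b),(b,c,d,a),(d,c,b,a),(b,a,d,c),(a,d,c,b),(c,b,a,d)}"
  shows "\<exists>g\<in>D4 (2*k). board_partition k (g ` B) = t"
  using assms(3) bp_g0[OF assms(1,2)] bp_g1[OF assms(1,2)] bp_g2[OF assms(1,2)] bp_g3[OF assms(1,2)]
    bp_g4[OF assms(1,2)] bp_g5[OF assms(1,2)] bp_g6[OF assms(1,2)] bp_g7[OF assms(1,2)]
  by (elim insertE emptyE) blast+


lemma canon_max: "a \<ge> b \<Longrightarrow> a \<ge> c \<Longrightarrow> a \<ge> (d::nat) \<Longrightarrow> canonical_partition (a,b,c,d) \<or> canonical_partition (a,d,c,b) \<or> canonical_partition (b,a,d,c) \<or> canonical_partition (d,a,b,c)"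
  unfolding canonical_partition_def
  by (cases "b \<ge> d"; cases "a = b"; cases "a = d"; cases "c \<ge> d"; cases "c \<ge> b"; simp)
lemma canon_ex: "canonical_partition (a,b,c,d) \<or> canonical_partition (d,a,b,c) \<or> canonical_partition (c,d,a,b) \<or> canonical_partition (b,c,d,a) \<or>
  canonical_partition (d,c,b,a) \<or> canonical_partition (b,a,d,c) \<or> canonical_partition (a,d,c,b) \<or> canonical_partition (c,b,a,d)"
proof -
  have "(a \<ge> b \<and> a \<ge> c \<and> a \<ge> d) \<or> (b \<ge> a \<and> b \<ge> c \<and> b \<ge> d) \<or> (c \<ge> b \<and> c \<ge> a \<and> c \<ge> d) \<or> (d \<ge> b \<and> d \<ge> c \<and> d \<ge> a)" by linarith
  then show ?thesis using canon_max[where a=a and b=b and c=c and d=d] canon_max[where a=b and b=c and c=d and d=a] canon_max[where a=c and b=d and c=a and d=b] canon_max[where a=d and b=a and c=b and d=c] by blast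
qed

lemma canon_uniq: "canonical_partition (a,b,c,d) \<Longrightarrow> q \<in> {(a,b,c,d),(d,a,b,c),(c,d,a,b),(b,c,d,a),(d,c,b,a),(b,a,d,c),(a,d,c,b),(c,b,a,d)} \<Longrightarrow> canonical_partition q \<Longrightarrow> q = (a,b,c,d)"
  unfolding canonical_partition_def by (elim insertE emptyE; simp; linarith)

theorem theorem4p1:
  fixes k r :: nat
  assumes "k \<ge> 1" and "1 \<le> r" and "r \<le> 4 * k^2"
  shows "(\<exists>P. boards_bar k r =
              (\<Union>p\<in>P. {B \<in> boards (2*k) r. board_partition k B = p})
            \<and> (\<forall>p\<in>P. \<forall>q\<in>P. p \<noteq> q \<longrightarrow>
                 {B \<in> boards (2*k) r. board_partition k B = p} \<inter>
                 {B \<in> boards (2*k) r. board_partition k B = q} = {}))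
       \<and> (\<forall>B\<in>boards (2*k) r. \<exists>B'\<in>boards_bar k r. D4_equiv (2*k) B B')
       \<and> (\<forall>B1\<in>boards_bar k r. \<forall>B2\<in>boards_bar k r.
            D4_equiv (2*k) B1 B2 \<longrightarrow> board_partition k B1 = board_partition k B2)"
proof (intro conjI ballI impI)
  show "\<exists>P. boards_bar k r =
              (\<Union>p\<in>P. {B \<in> boards (2*k) r. board_partition k B = p})
            \<and> (\<forall>p\<in>P. \<forall>q\<in>P. p \<noteq> q \<longrightarrow>
                 {B \<in> boards (2*k) r. board_partition k B = p} \<inter>
                 {B \<in> boards (2*k) r. board_partition k B = q} = {})"
    by (rule exI[of _ "{p. canonical_partition p}"]) (auto simp: boards_bar_def)
next
  fix B assume B: "B \<in> boards (2*k) r"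
  then have Bg: "B \<subseteq> grid (2*k)" by (simp add: boards_def)
  obtain a b c d where p: "board_partition k B = (a,b,c,d)" by (cases "board_partition k B") auto
  from canon_ex[of a b c d] obtain t where t: "t \<in> {(a,b,c,d),(d,a,b,c),(c,d,a,b),(b,c,d,a),(d,c,b,a),(b,a,d,c),(a,d,c,b),(c,b,a,d)}" "canonical_partition t" by blast
  from D4_exists[OF Bg p t(1)] obtain g where g: "g \<in> D4 (2*k)" "board_partition k (g ` B) = t" by blast
  have "g ` B \<in> boards_bar k r" using D4_board[OF g(1) B] g(2) t(2) by (simp add: boards_bar_def)
  then show "\<exists>B'\<in>boards_bar k r. D4_equiv (2*k) B B'" using g(1) unfolding D4_equiv_def by blast
next
  fix B1 B2 assume B1: "B1 \<in> boards_bar k r" and B2: "B2 \<in> boards_bar k r" and eq: "D4_equiv (2*k) B1 B2"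
  then obtain g where g: "g \<in> D4 (2*k)" "g ` B1 = B2" unfolding D4_equiv_def by blast
  have Bg: "B1 \<subseteq> grid (2*k)" using B1 by (simp add: boards_bar_def boards_def)
  obtain a b c d where p: "board_partition k B1 = (a,b,c,d)" by (cases "board_partition k B1") auto
  have c1: "canonical_partition (a,b,c,d)" using B1 p by (simp add: boards_bar_def)
  have c2: "canonical_partition (board_partition k B2)" using B2 by (simp add: boards_bar_def)
  have "board_partition k B2 = (a,b,c,d)"
    using canon_uniq[OF c1 D4_cases[OF g(1) Bg p] ] c2 g(2) by simp
  then show "board_partition k B1 = board_partition k B2" using p by simp
qed

end
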